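(* (Transversality Mapping Theorem.) Let $E:\mathbb{R}^{N_x}\to\mathbb{R}$ be twice differentiable, and consider the optimal control problem (R): minimize $y(t_f)$ over state trajectories $(y(\cdot),\boldsymbol x(\cdot),\boldsymbol v(\cdot))$ with unconstrained controls $\boldsymbol u(t)\in\mathbb{R}^{N_x}$ and free final time $t_f$, subject to $\dot{\boldsymbol x}=\boldsymbol v$, $\dot{\boldsymbol v}=\boldsymbol u$, $\dot y=\nabla E(\boldsymbol x)\cdot\boldsymbol v$, $(\boldsymbol x(t_0),t_0)=(\boldsymbol x^0,t^0)$, $y(t_0)=E(\boldsymbol x^0)$, $\boldsymbol v(t_f)=\mathbf 0$, with $t_f$, $\boldsymbol x(t_f)$, $\boldsymbol v(t_0)$ free. Then the first-order necessary condition for the static problem $\min_{\boldsymbol x_f\in\mathbb{R}^{N_x}}E(\boldsymbol x_f)$ is embedded in the terminal transversality condition of (R): along any extremal of (R), the terminal transversality condition $\boldsymbol\lambda_x(t_f)=\mathbf 0$ implies $\nabla E(\boldsymbol x_f)=\mathbf 0$, where $\boldsymbol x_f=\boldsymbol x(t_f)$.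
   Context: The Pontryagin Hamiltonian of (R) is $H=\boldsymbol\lambda_x\cdot\boldsymbol v+\boldsymbol\lambda_v\cdot\boldsymbol u+\lambda_y\,\nabla E(\boldsymbol x)\cdot\boldsymbol v$. An extremal is a state–control trajectory together with costates $(\boldsymbol\lambda_x,\boldsymbol\lambda_v,\lambda_y)$ and a cost multiplier $\nu_0\ge0$, not all multipliers vanishing, satisfying the adjoint equations $\dot{\boldsymbol\lambda}_x=-\lambda_y\nabla^2E(\boldsymbol x)\boldsymbol v$, $\dot{\boldsymbol\lambda}_v=-\boldsymbol\lambda_x-\lambda_y\nabla E(\boldsymbol x)$, $\dot\lambda_y=0$; the transversality conditions $\boldsymbol\lambda_x(t_f)=\mathbf 0$, $\boldsymbol\lambda_v(t_0)=\mathbf 0$, $\lambda_y(t_f)=\nu_0$; and the Hamiltonian minimization condition ($\boldsymbol u(t)$ minimizes $H$ over $\mathbb{R}^{N_x}$, which for this $H$ linear in an unconstrained $\boldsymbol u$ forces $\partial_{\boldsymbol u}H=\boldsymbol\lambda_v(t)=\mathbf 0$ for all $t\in[t_0,t_f]$). *)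

theory Defs
  imports "HOL-Analysis.Analysis"
begin

text \<open>R^{N_x} is modelled by an arbitrary Euclidean space 'a.
  E is twice (Frechet) differentiable with gradient gE and Hessian HE.\<close>
definition twice_diff_grad_hess ::
  "('a::euclidean_space \<Rightarrow> real) \<Rightarrow> ('a \<Rightarrow> 'a) \<Rightarrow> ('a \<Rightarrow> 'a \<Rightarrow> 'a) \<Rightarrow> bool" where
  "twice_diff_grad_hess E gE HE \<longleftrightarrow>
     (\<forall>z. (E has_derivative (\<lambda>h. gE z \<bullet> h)) (at z) \<and> (gE has_derivative HE z) (at z))"

definition hamiltonian_R ::
  "('a::euclidean_space \<Rightarrow> 'a) \<Rightarrow> 'a \<Rightarrow> 'a \<Rightarrow> real \<Rightarrow> 'a \<Rightarrow> 'a \<Rightarrow> 'a \<Rightarrow> real" where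
  "hamiltonian_R gE lx lv ly z w u = lx \<bullet> w + lv \<bullet> u + ly * (gE z \<bullet> w)"

definition admissible_R ::
  "('a::euclidean_space \<Rightarrow> real) \<Rightarrow> ('a \<Rightarrow> 'a) \<Rightarrow> 'a \<Rightarrow> real \<Rightarrow> real \<Rightarrow>
   (real \<Rightarrow> real) \<Rightarrow> (real \<Rightarrow> 'a) \<Rightarrow> (real \<Rightarrow> 'a) \<Rightarrow> (real \<Rightarrow> 'a) \<Rightarrow> bool" where
  "admissible_R E gE x0 t0 tf y x v u \<longleftrightarrow>
     t0 < tf \<and> x t0 = x0 \<and> y t0 = E x0 \<and> v tf = 0 \<and>
     (\<forall>t\<in>{t0..tf}.
        (x has_vector_derivative v t) (at t within {t0..tf}) \<and>
        (v has_vector_derivative u t) (at t within {t0..tf}) \<and>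
        (y has_real_derivative (gE (x t) \<bullet> v t)) (at t within {t0..tf}))"

definition extremal_R ::
  "('a::euclidean_space \<Rightarrow> real) \<Rightarrow> ('a \<Rightarrow> 'a) \<Rightarrow> ('a \<Rightarrow> 'a \<Rightarrow> 'a) \<Rightarrow> 'a \<Rightarrow> real \<Rightarrow> real \<Rightarrow>
   (real \<Rightarrow> real) \<Rightarrow> (real \<Rightarrow> 'a) \<Rightarrow> (real \<Rightarrow> 'a) \<Rightarrow> (real \<Rightarrow> 'a) \<Rightarrow>
   (real \<Rightarrow> 'a) \<Rightarrow> (real \<Rightarrow> 'a) \<Rightarrow> (real \<Rightarrow> real) \<Rightarrow> real \<Rightarrow> bool" where
  "extremal_R E gE HE x0 t0 tf y x v u lx lv ly nu0 \<longleftrightarrow>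
     admissible_R E gE x0 t0 tf y x v u \<and>
     nu0 \<ge> 0 \<and>
     \<not> (nu0 = 0 \<and> (\<forall>t\<in>{t0..tf}. lx t = 0 \<and> lv t = 0 \<and> ly t = 0)) \<and>
     (\<forall>t\<in>{t0..tf}.
        (lx has_vector_derivative (- (ly t *\<^sub>R HE (x t) (v t)))) (at t within {t0..tf}) \<and>
        (lv has_vector_derivative (- lx t - ly t *\<^sub>R gE (x t))) (at t within {t0..tf}) \<and>
        (ly has_real_derivative 0) (at t within {t0..tf})) \<and>
     lx tf = 0 \<and> lv t0 = 0 \<and> ly tf = nu0 \<and>
     (\<forall>t\<in>{t0..tf}. \<forall>w.
        hamiltonian_R gE (lx t) (lv t) (ly t) (x t) (v t) (u t)
          \<le> hamiltonian_R gE (lx t) (lv t) (ly t) (x t) (v t) w)"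

end

theory Submission
  imports Defs
begin

theorem theorem2:
  fixes E :: "'a::euclidean_space \<Rightarrow> real"
    and gE :: "'a \<Rightarrow> 'a" and HE :: "'a \<Rightarrow> 'a \<Rightarrow> 'a"
    and x0 :: 'a and t0 tf :: real
    and y :: "real \<Rightarrow> real" and x v u :: "real \<Rightarrow> 'a"
    and lx lv :: "real \<Rightarrow> 'a" and ly :: "real \<Rightarrow> real" and nu0 :: real
  assumes "twice_diff_grad_hess E gE HE"
    and "extremal_R E gE HE x0 t0 tf y x v u lx lv ly nu0"
  shows "lx tf = 0 \<longrightarrow> gE (x tf) = 0"
proof
  let ?S = "{t0..tf}"
  have ext: "extremal_R E gE HE x0 t0 tf y x v u lx lv ly nu0" by fact
  have lt: "t0 < tf" using ext unfolding extremal_R_def admissible_R_def by blast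
  have lv0: "lv t = 0" if t: "t \<in> ?S" for t
  proof -
    have "hamiltonian_R gE (lx t) (lv t) (ly t) (x t) (v t) (u t)
          \<le> hamiltonian_R gE (lx t) (lv t) (ly t) (x t) (v t) (u t - lv t)"
      using ext t unfolding extremal_R_def by blast
    hence "lv t \<bullet> lv t \<le> 0" by (simp add: hamiltonian_R_def inner_diff_right)
    thus ?thesis by (metis inner_eq_zero_iff inner_ge_zero order_antisym)
  qed
  have key: "lx t + ly t *\<^sub>R gE (x t) = 0" if t: "t \<in> ?S" for t
  proof -
    have d1: "(lv has_vector_derivative (- lx t - ly t *\<^sub>R gE (x t))) (at t within cbox t0 tf)"
      using ext t unfolding extremal_R_def by auto
    have "(lv has_vector_derivative 0) (at t within ?S)"
      by (rule has_vector_derivative_transform_within[where f="\<lambda>_. 0" and d=1])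
         (use t lv0 in auto)
    hence d2: "(lv has_vector_derivative 0) (at t within cbox t0 tf)" by simp
    have "- lx t - ly t *\<^sub>R gE (x t) = 0"
      using vector_derivative_unique_within_closed_interval[OF lt _ d1 d2] t by simp
    thus ?thesis by (metis add.commute diff_add_cancel diff_minus_eq_add neg_eq_iff_add_eq_0)
  qed
  assume lxf: "lx tf = 0"
  have tfS: "tf \<in> ?S" using lt by simp
  have "ly tf *\<^sub>R gE (x tf) = 0" using key[OF tfS] lxf by simp
  moreover have "ly tf \<noteq> 0"
  proof
    assume ly0: "ly tf = 0"
    have "\<exists>c. \<forall>t\<in>?S. ly t = c"
      by (rule has_field_derivative_zero_constant) (use ext in \<open>auto simp: extremal_R_def\<close>)
    then obtain c where c: "\<forall>t\<in>?S. ly t = c" by blast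
    hence lyz: "\<forall>t\<in>?S. ly t = 0" using ly0 tfS by auto
    hence "\<forall>t\<in>?S. lx t = 0" using key by (metis add.right_neutral scale_zero_left)
    moreover have "nu0 = 0" using ext ly0 unfolding extremal_R_def by simp
    ultimately show False using ext lyz lv0 unfolding extremal_R_def by blast
  qed
  ultimately show "gE (x tf) = 0" by simp
qed

end
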